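(* Let $K\subset S^3$ be a knot with Alexander module $H$. Let $k_1,k_2\geq1$ be coprime integers and let $\chi_i\colon H\to\mathbb C^*$ ($i=1,2$) be characters such that $\chi_i$ factors through $H/(t^{k_i}-1)H$. Then there is an isomorphism of representations of $\pi_K$ \[\alpha_{(k_1,\chi_1)}\otimes\alpha_{(k_2,\chi_2)}\cong \alpha_{(k_1k_2,\chi_1\chi_2)},\] where $\chi_1\chi_2$ denotes the pointwise product character (which factors through $H/(t^{k_1k_2}-1)H$).
   Context: For a knot $K$, $X_K=S^3\setminus\nu K$, $\pi_K=\pi_1(X_K)$, and $H=H_1(X_K;\mathbb Z[t^{\pm1}])$ is the Alexander module (the homology of the infinite cyclic cover, with $t$ acting by deck transformation). Then $\pi_K/\pi_K^{(2)}\cong\mathbb Z\ltimes H$, where $n\in\mathbb Z$ acts on $H$ by multiplication by $t^n$ (the generator of $\mathbb Z$ corresponding to a meridian). For $n\ge1$, a character $\chi\colon H\to\mathbb C^*$ factoring through $H/(t^n-1)H$, and $z\in\mathbb C$ with $z^n=(-1)^{n+1}$, define $\alpha_{(n,\chi)}\colon \mathbb Z\ltimes H\to \mathrm{SL}(n,\mathbb C)$ by \[\alpha_{(n,\chi)}(j,h)=P^j\cdot\mathrm{diag}\big(\chi(h),\chi(th),\dots,\chi(t^{n-1}h)\big),\] where $P$ is the $n\times n$ matrix with entries $z$ in positions $(1,n),(2,1),(3,2),\dots,(n,n-1)$ and $0$ elsewhere; its isomorphism type does not depend on the choice of $z$. It is regarded as a representation of $\pi_K$ via $\pi_K\to\pi_K/\pi_K^{(2)}\cong\mathbb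 Z\ltimes H$. *)

theory Defs
  imports Complex_Main "Jordan_Normal_Form.Matrix" "Jordan_Normal_Form.Gauss_Jordan_Elimination"
begin

text \<open>Abstract Alexander module: an abelian group H with the action of t,
  an additive bijection (so H is a Z[t,t^-1]-module).\<close>
definition alex_module :: "('h::ab_group_add \<Rightarrow> 'h) \<Rightarrow> bool" where
  "alex_module t \<longleftrightarrow> bij t \<and> (\<forall>a b. t (a + b) = t a + t b)"

definition character :: "('h::ab_group_add \<Rightarrow> complex) \<Rightarrow> bool" where
  "character \<chi> \<longleftrightarrow> (\<forall>a b. \<chi> (a + b) = \<chi> a * \<chi> b) \<and> (\<forall>a. \<chi> a \<noteq> 0)"

text \<open>chi factors through H/(t^n - 1)H, i.e. chi vanishes on (t^n - 1)H.\<close>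
definition factors_through :: "('h::ab_group_add \<Rightarrow> 'h) \<Rightarrow> nat \<Rightarrow> ('h \<Rightarrow> complex) \<Rightarrow> bool" where
  "factors_through t n \<chi> \<longleftrightarrow> (\<forall>h. \<chi> ((t ^^ n) h - h) = 1)"

text \<open>The matrix P with entries z at (1,n),(2,1),...,(n,n-1) (1-based).\<close>
definition perm_mat :: "nat \<Rightarrow> complex \<Rightarrow> complex mat" where
  "perm_mat n z = mat n n (\<lambda>(r, c). if r = (c + 1) mod n then z else 0)"

definition mat_int_pow :: "complex mat \<Rightarrow> int \<Rightarrow> complex mat" where
  "mat_int_pow A j = (if j \<ge> 0 then A ^\<^sub>m nat j else (the (mat_inverse A)) ^\<^sub>m nat (- j))"

text \<open>The representation alpha_(n,chi) of Z \<ltimes> H.\<close>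
definition alpha :: "('h::ab_group_add \<Rightarrow> 'h) \<Rightarrow> nat \<Rightarrow> complex \<Rightarrow> ('h \<Rightarrow> complex)
    \<Rightarrow> int \<Rightarrow> 'h \<Rightarrow> complex mat" where
  "alpha t n z \<chi> j h = mat_int_pow (perm_mat n z) j * mat n n (\<lambda>(r, c). if r = c then \<chi> ((t ^^ r) h) else 0)"

definition kron :: "complex mat \<Rightarrow> complex mat \<Rightarrow> complex mat" where
  "kron A B = mat (dim_row A * dim_row B) (dim_col A * dim_col B)
     (\<lambda>(i, j). A $$ (i div dim_row B, j div dim_col B) * B $$ (i mod dim_row B, j mod dim_col B))"

definition rep_iso :: "nat \<Rightarrow> (int \<Rightarrow> 'h \<Rightarrow> complex mat) \<Rightarrow> (int \<Rightarrow> 'h \<Rightarrow> complex mat) \<Rightarrow> bool" where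
  "rep_iso N \<rho>1 \<rho>2 \<longleftrightarrow> (\<exists>T \<in> carrier_mat N N. invertible_mat T \<and>
      (\<forall>j h. T * \<rho>1 j h = \<rho>2 j h * T))"

end

theory Submission
  imports Defs "Jordan_Normal_Form.Determinant"
begin

definition shift :: "nat \<Rightarrow> int \<Rightarrow> complex \<Rightarrow> complex mat" where
  "shift n s a = mat n n (\<lambda>(r,c). if int r = (int c + s) mod int n then a else 0)"

lemma sum_single:
  assumes "(l0::nat) < n"
  shows "(\<Sum>l<n. f l * (if l = l0 then (a::complex) else 0)) = f l0 * a"
proof -
  have "(\<Sum>l<n. f l * (if l = l0 then a else 0)) = (\<Sum>l<n. if l = l0 then f l * a else 0)"
    by (intro sum.cong) auto
  also have "\<dots> = f l0 * a" using assms by simp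
  finally show ?thesis .
qed

lemma shift_carrier[simp]: "shift n s a \<in> carrier_mat n n" by (simp add: shift_def)
lemma shift_dims[simp]: "dim_row (shift n s a) = n" "dim_col (shift n s a) = n" by (simp_all add: shift_def)

lemma shift_mult:
  assumes n: "n > 0"
  shows "shift n s a * shift n u b = shift n (s + u) (a * b)"
proof (rule eq_matI)
  fix r c assume r: "r < dim_row (shift n (s + u) (a * b))" and c: "c < dim_col (shift n (s + u) (a * b))"
  hence r: "r < n" and c: "c < n" by auto
  define l0 where "l0 = nat ((int c + u) mod int n)"
  have l0: "l0 < n" "int l0 = (int c + u) mod int n" using n unfolding l0_def
    by (auto simp: nat_less_iff)
  have "(shift n s a * shift n u b) $$ (r, c) = (\<Sum>l<n. shift n s a $$ (r, l) * shift n u b $$ (l, c))"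
    using r c by (simp add: scalar_prod_def lessThan_atLeast0)
  also have "\<dots> = (\<Sum>l<n. shift n s a $$ (r, l) * (if l = l0 then b else 0))"
  proof (intro sum.cong refl)
    fix l assume "l \<in> {..<n}"
    hence "l < n" by simp
    hence "(int l = (int c + u) mod int n) = (l = l0)" using l0 by auto
    thus "shift n s a $$ (r, l) * shift n u b $$ (l, c) = shift n s a $$ (r, l) * (if l = l0 then b else 0)"
      using \<open>l < n\<close> c by (simp add: shift_def)
  qed
  also have "\<dots> = shift n s a $$ (r, l0) * b" by (rule sum_single[OF l0(1)])
  also have "\<dots> = shift n (s + u) (a * b) $$ (r, c)"
    using r c l0 by (auto simp: shift_def mod_add_right_eq add.commute add.left_commute)
  finally show "(shift n s a * shift n u b) $$ (r, c) = shift n (s + u) (a * b) $$ (r, c)" .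
qed auto

lemma shift_one: assumes "n > 0" shows "shift n 0 1 = 1\<^sub>m n"
proof (rule eq_matI)
  fix r c assume "r < dim_row (1\<^sub>m n :: complex mat)" "c < dim_col (1\<^sub>m n :: complex mat)"
  thus "shift n 0 1 $$ (r, c) = 1\<^sub>m n $$ (r, c)" by (auto simp: shift_def)
qed auto

lemma shift_pow:
  assumes n: "n > 0"
  shows "shift n s a ^\<^sub>m k = shift n (s * int k) (a ^ k)"
proof (induction k)
  case 0 thus ?case using shift_one[OF n] by simp
next
  case (Suc k)
  thus ?case using shift_mult[OF n] by (simp add: algebra_simps)
qed

lemma perm_mat_shift: assumes "n > 0" shows "perm_mat n z = shift n 1 z"
proof (rule eq_matI)
  fix r c assume "r < dim_row (shift n 1 z)" "c < dim_col (shift n 1 z)"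
  hence rc: "r < n" "c < n" by auto
  have "(int r = (int c + 1) mod int n) = (r = (c + 1) mod n)"
    by (metis of_nat_1 of_nat_add of_nat_eq_iff zmod_int)
  thus "perm_mat n z $$ (r, c) = shift n 1 z $$ (r, c)" using rc
    by (simp add: perm_mat_def shift_def)
qed (auto simp: perm_mat_def)

lemma mat_int_pow_perm:
  assumes n: "n > 0" and z: "z \<noteq> 0"
  shows "mat_int_pow (perm_mat n z) j = shift n j (z powi j)"
proof (cases "j \<ge> 0")
  case True
  thus ?thesis using shift_pow[OF n, of 1 z "nat j"]
    by (simp add: mat_int_pow_def perm_mat_shift[OF n] power_int_def)
next
  case False
  let ?P = "shift n 1 z" and ?Q = "shift n (-1) (1/z)"
  have PQ: "?P * ?Q = 1\<^sub>m n" using shift_mult[OF n, of 1 z "-1" "1/z"] shift_one[OF n] z by simp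
  have QP: "?Q * ?P = 1\<^sub>m n" using shift_mult[OF n, of "-1" "1/z" 1 z] shift_one[OF n] z by simp
  have U: "?P \<in> Units (ring_mat TYPE(complex) n undefined)"
    unfolding Units_def using PQ QP by (auto simp: ring_mat_simps intro!: bexI[of _ ?Q])
  have inv: "mat_inverse ?P = Some ?Q"
  proof (cases "mat_inverse ?P")
    case None
    thus ?thesis using mat_inverse(1)[OF shift_carrier None, of undefined] U by blast
  next
    case (Some B)
    from mat_inverse(2)[OF shift_carrier Some] have "?P * B = 1\<^sub>m n" "B \<in> carrier_mat n n" by auto
    hence "?Q * (?P * B) = (?Q * ?P) * B" using assoc_mult_mat[of ?Q n n ?P n B n] by simp
    hence "?Q = B" using QP \<open>?P * B = 1\<^sub>m n\<close> \<open>B \<in> carrier_mat n n\<close> by simp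
    thus ?thesis using Some by simp
  qed
  have "mat_int_pow (perm_mat n z) j = ?Q ^\<^sub>m nat (- j)"
    using False inv by (simp add: mat_int_pow_def perm_mat_shift[OF n])
  also have "\<dots> = shift n (- int (nat (- j))) ((1/z) ^ nat (- j))" using shift_pow[OF n] by simp
  also have "\<dots> = shift n j (z powi j)" using False
    by (simp add: power_int_def power_one_over power_inverse inverse_eq_divide)
  finally show ?thesis .
qed

lemma alpha_eq:
  assumes n: "n > 0" and z: "z \<noteq> 0"
  shows "alpha t n z \<chi> j h = mat n n (\<lambda>(r,c). if int r = (int c + j) mod int n then z powi j * \<chi> ((t ^^ c) h) else 0)"
proof (rule eq_matI)
  fix r c assume "r < dim_row (mat n n (\<lambda>(r,c). if int r = (int c + j) mod int n then z powi j * \<chi> ((t ^^ c) h) else 0))"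
    "c < dim_col (mat n n (\<lambda>(r,c). if int r = (int c + j) mod int n then z powi j * \<chi> ((t ^^ c) h) else 0))"
  hence rc: "r < n" "c < n" by auto
  let ?S = "shift n j (z powi j)"
  have "alpha t n z \<chi> j h $$ (r, c) = (\<Sum>l<n. ?S $$ (r, l) * (if l = c then \<chi> ((t ^^ c) h) else 0))"
    unfolding alpha_def mat_int_pow_perm[OF n z] using rc
    by (auto simp: scalar_prod_def lessThan_atLeast0 intro!: sum.cong)
  also have "\<dots> = ?S $$ (r, c) * \<chi> ((t ^^ c) h)" by (rule sum_single[OF rc(2)])
  finally show "alpha t n z \<chi> j h $$ (r, c) = mat n n (\<lambda>(r,c). if int r = (int c + j) mod int n then z powi j * \<chi> ((t ^^ c) h) else 0) $$ (r, c)"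
    using rc by (simp add: shift_def)
qed (auto simp: alpha_def mat_int_pow_perm[OF n z])


lemma modeq_int:
  fixes a M K j :: int
  assumes "0 \<le> a" "a < K"
  shows "(M mod K = (a + j) mod K) = (a = (M - j) mod K)"
proof
  assume h: "M mod K = (a + j) mod K"
  have "(M - j) mod K = (M mod K - j) mod K" by (simp add: mod_diff_left_eq)
  also have "\<dots> = ((a + j) mod K - j) mod K" using h by simp
  also have "\<dots> = a mod K" by (simp add: mod_diff_left_eq)
  also have "\<dots> = a" using assms by simp
  finally show "a = (M - j) mod K" by simp
next
  assume "a = (M - j) mod K"
  thus "M mod K = (a + j) mod K" by (simp add: mod_add_left_eq)
qed

lemma kron_mat:
  assumes "b > 0"
  shows "kron (mat a a f) (mat b b g) = mat (a*b) (a*b) (\<lambda>(i,i'). f (i div b, i' div b) * g (i mod b, i' mod b))"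
  using assms by (intro eq_matI) (auto simp: kron_def less_mult_imp_div_less)

lemma char_period:
  assumes c: "character \<chi>" and f: "factors_through t k \<chi>"
  shows "\<chi> ((t ^^ m) h) = \<chi> ((t ^^ (m mod k)) h)"
proof -
  have step: "\<chi> ((t ^^ k) y) = \<chi> y" for y
  proof -
    have "\<chi> ((t ^^ k) y) = \<chi> (((t ^^ k) y - y) + y)" by simp
    also have "\<dots> = \<chi> ((t ^^ k) y - y) * \<chi> y" using c unfolding character_def by blast
    also have "\<dots> = \<chi> y" using f unfolding factors_through_def by simp
    finally show ?thesis .
  qed
  have gen: "\<chi> ((t ^^ (k * q)) y) = \<chi> y" for q y
  proof (induction q)
    case (Suc q)
    have "(t ^^ (k * Suc q)) y = (t ^^ k) ((t ^^ (k * q)) y)"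
      by (simp add: funpow_add)
    thus ?case using Suc step by simp
  qed simp
  have "m = k * (m div k) + m mod k" by simp
  hence "(t ^^ m) h = (t ^^ (k * (m div k))) ((t ^^ (m mod k)) h)"
    by (metis comp_apply funpow_add)
  thus ?thesis using gen by simp
qed

lemma sign_lemma:
  assumes "coprime (k1::nat) k2" "z1 ^ k1 = (-1) ^ (k1 + 1)" "z2 ^ k2 = (-1) ^ (k2 + 1)"
    "z3 ^ (k1 * k2) = (-1) ^ (k1 * k2 + 1)"
  shows "(z1 * z2) ^ (k1 * k2) = (z3::complex) ^ (k1 * k2)"
proof -
  have ne: "\<not> (even k1 \<and> even k2)"
    using assms(1) by (metis coprime_common_divisor dvd_1_left nat_dvd_1_iff_1 numeral_eq_one_iff semiring_norm(85))
  have "(z1 * z2) ^ (k1 * k2) = (z1 ^ k1) ^ k2 * (z2 ^ k2) ^ k1"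
    by (simp add: power_mult_distrib power_mult[symmetric] mult.commute)
  also have "\<dots> = ((-1) ^ (k1 + 1)) ^ k2 * ((-1) ^ (k2 + 1)) ^ k1" using assms by (simp only:)
  also have "\<dots> = (-1) ^ ((k1 + 1) * k2 + (k2 + 1) * k1)"
    by (metis power_mult power_add)
  also have "\<dots> = (-1) ^ (k1 * k2 + 1)"
    using ne by (cases "even k1"; cases "even k2") (auto simp: neg_one_even_power neg_one_odd_power)
  finally show ?thesis using assms(4) by simp
qed


lemma sum_single2:
  assumes "(l0::nat) < n"
  shows "(\<Sum>l<n. (if l = l0 then (a::complex) else 0) * f l) = a * f l0"
  using sum_single[OF assms, of f a] by (simp add: mult.commute)

lemma nonzero_root: assumes "(z::complex) ^ k = (-1) ^ (k + 1)" shows "z \<noteq> 0"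
proof
  assume "z = 0"
  with assms have "(-1::complex) ^ (k + 1) = 0 ^ k" by simp
  thus False by (cases k) auto
qed

theorem proposition4:
  fixes t :: "'h::ab_group_add \<Rightarrow> 'h" and k1 k2 :: nat and \<chi>1 \<chi>2 :: "'h \<Rightarrow> complex"
    and z1 z2 z3 :: complex
  assumes "alex_module t"
    and "k1 \<ge> 1" and "k2 \<ge> 1" and "coprime k1 k2"
    and "character \<chi>1" and "character \<chi>2"
    and "factors_through t k1 \<chi>1" and "factors_through t k2 \<chi>2"
    and "z1 ^ k1 = (-1) ^ (k1 + 1)" and "z2 ^ k2 = (-1) ^ (k2 + 1)"
    and "z3 ^ (k1 * k2) = (-1) ^ (k1 * k2 + 1)"
  shows "rep_iso (k1 * k2)
           (\<lambda>j h. kron (alpha t k1 z1 \<chi>1 j h) (alpha t k2 z2 \<chi>2 j h))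
           (alpha t (k1 * k2) z3 (\<lambda>h. \<chi>1 h * \<chi>2 h))"
proof -
  define N where "N = k1 * k2"
  have k1: "k1 > 0" and k2: "k2 > 0" using assms(2,3) by auto
  have N: "N > 0" unfolding N_def using k1 k2 by simp
  have z1: "z1 \<noteq> 0" by (rule nonzero_root[OF assms(9)])
  have z2: "z2 \<noteq> 0" by (rule nonzero_root[OF assms(10)])
  have z3: "z3 \<noteq> 0" by (rule nonzero_root[OF assms(11)])
  define \<omega> where "\<omega> = z3 / (z1 * z2)"
  have \<omega>0: "\<omega> \<noteq> 0" using z1 z2 z3 by (simp add: \<omega>_def)
  have \<omega>N: "\<omega> ^ N = 1"
    using sign_lemma[OF assms(4,9,10,11)] z1 z2 z3 unfolding \<omega>_def N_def by (simp add: power_divide)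
  have \<omega>z: "\<omega> * (z1 * z2) = z3" using z1 z2 by (simp add: \<omega>_def)
  define \<sigma> where "\<sigma> m = (m mod k1) * k2 + m mod k2" for m :: nat
  have \<sigma>N: "\<sigma> m < N" for m
  proof -
    have "m mod k1 < k1" "m mod k2 < k2" using k1 k2 by auto
    hence "(m mod k1) * k2 + m mod k2 < (m mod k1) * k2 + k2" by simp
    also have "\<dots> = (m mod k1 + 1) * k2" by simp
    also have "\<dots> \<le> k1 * k2" using \<open>m mod k1 < k1\<close> by (intro mult_right_mono) auto
    finally show ?thesis by (simp add: \<sigma>_def N_def)
  qed
  have \<sigma>div: "\<sigma> m div k2 = m mod k1" and \<sigma>mod: "\<sigma> m mod k2 = m mod k2" for m
    using k2 by (simp_all add: \<sigma>_def)
  have \<sigma>inj: "m = m'" if "m < N" "m' < N" "\<sigma> m = \<sigma> m'" for m m'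
  proof -
    have a: "m mod k1 = m' mod k1" using \<sigma>div that(3) by metis
    have b: "m mod k2 = m' mod k2" using \<sigma>mod that(3) by metis
    have "int k1 dvd int m - int m'" using a by (metis mod_eq_dvd_iff of_nat_mod)
    moreover have "int k2 dvd int m - int m'" using b by (metis mod_eq_dvd_iff of_nat_mod)
    moreover have "coprime (int k1) (int k2)" using assms(4) by simp
    ultimately have "int k1 * int k2 dvd int m - int m'" by (rule divides_mult)
    hence "int m mod int N = int m' mod int N" unfolding N_def by (simp add: mod_eq_dvd_iff)
    thus ?thesis using that(1,2) by simp
  qed
  define T where "T = mat N N (\<lambda>(m, i). if i = \<sigma> m then \<omega> ^ m else 0)"
  define U where "U = mat N N (\<lambda>(i, m). if i = \<sigma> m then 1 / \<omega> ^ m else 0)"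
  have TC: "T \<in> carrier_mat N N" and UC: "U \<in> carrier_mat N N" by (simp_all add: T_def U_def)
  have TU: "T * U = 1\<^sub>m N"
  proof (rule eq_matI)
    fix m m' assume "m < dim_row (1\<^sub>m N :: complex mat)" "m' < dim_col (1\<^sub>m N :: complex mat)"
    hence mm: "m < N" "m' < N" by auto
    have "(T * U) $$ (m, m') = (\<Sum>i<N. (if i = \<sigma> m then \<omega> ^ m else 0) * U $$ (i, m'))"
      using mm by (auto simp: T_def U_def scalar_prod_def lessThan_atLeast0 intro!: sum.cong)
    also have "\<dots> = \<omega> ^ m * U $$ (\<sigma> m, m')" by (rule sum_single2[OF \<sigma>N])
    also have "\<dots> = 1\<^sub>m N $$ (m, m')" using mm \<sigma>N \<sigma>inj \<omega>0 by (auto simp: U_def)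
    finally show "(T * U) $$ (m, m') = 1\<^sub>m N $$ (m, m')" .
  qed (auto simp: T_def U_def)
  have UT: "U * T = 1\<^sub>m N" by (rule mat_mult_left_right_inverse[OF TC UC TU])
  have inv: "invertible_mat T"
    unfolding invertible_mat_def inverts_mat_def using TC UC TU UT by (auto intro!: exI[of _ U])
  have inter: "T * kron (alpha t k1 z1 \<chi>1 j h) (alpha t k2 z2 \<chi>2 j h)
      = alpha t (k1 * k2) z3 (\<lambda>h. \<chi>1 h * \<chi>2 h) j h * T" for j h
  proof -
    define f1 where "f1 = (\<lambda>(r::nat, c::nat). if int r = (int c + j) mod int k1 then z1 powi j * \<chi>1 ((t ^^ c) h) else 0)"
    define f2 where "f2 = (\<lambda>(r::nat, c::nat). if int r = (int c + j) mod int k2 then z2 powi j * \<chi>2 ((t ^^ c) h) else 0)"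
    define L where "L = mat N N (\<lambda>(i,i'). f1 (i div k2, i' div k2) * f2 (i mod k2, i' mod k2))"
    define R where "R = mat N N (\<lambda>(r,c). if int r = (int c + j) mod int N then z3 powi j * (\<chi>1 ((t ^^ c) h) * \<chi>2 ((t ^^ c) h)) else 0)"
    have Leq: "kron (alpha t k1 z1 \<chi>1 j h) (alpha t k2 z2 \<chi>2 j h) = L"
      unfolding alpha_eq[OF k1 z1] alpha_eq[OF k2 z2] kron_mat[OF k2] L_def N_def f1_def f2_def by simp
    have Req: "alpha t (k1 * k2) z3 (\<lambda>h. \<chi>1 h * \<chi>2 h) j h = R"
      unfolding alpha_eq[OF N[unfolded N_def] z3] R_def N_def by simp
    have "T * L = R * T"
    proof (rule eq_matI)
      fix m i' assume "m < dim_row (R * T)" "i' < dim_col (R * T)"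
      hence mi: "m < N" "i' < N" by (auto simp: R_def T_def)
      define m0 where "m0 = nat ((int m - j) mod int N)"
      have m0: "m0 < N" "int m0 = (int m - j) mod int N" using N unfolding m0_def
        by (auto simp: nat_less_iff)
      have "(T * L) $$ (m, i') = (\<Sum>i<N. (if i = \<sigma> m then \<omega> ^ m else 0) * L $$ (i, i'))"
        using mi by (auto simp: T_def L_def scalar_prod_def lessThan_atLeast0 intro!: sum.cong)
      also have "\<dots> = \<omega> ^ m * L $$ (\<sigma> m, i')" by (rule sum_single2[OF \<sigma>N])
      also have "\<dots> = \<omega> ^ m * (f1 (m mod k1, i' div k2) * f2 (m mod k2, i' mod k2))"
        using mi \<sigma>N by (simp add: L_def \<sigma>div \<sigma>mod)
      finally have lhs: "(T * L) $$ (m, i') = \<omega> ^ m * (f1 (m mod k1, i' div k2) * f2 (m mod k2, i' mod k2))" .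
      let ?c = "z3 powi j * (\<chi>1 ((t ^^ m0) h) * \<chi>2 ((t ^^ m0) h))"
      have "(R * T) $$ (m, i') = (\<Sum>l<N. (if l = m0 then ?c else 0) * T $$ (l, i'))"
      proof -
        have "(R * T) $$ (m, i') = (\<Sum>l<N. R $$ (m, l) * T $$ (l, i'))"
          using mi by (auto simp: T_def R_def scalar_prod_def lessThan_atLeast0 intro!: sum.cong)
        also have "\<dots> = (\<Sum>l<N. (if l = m0 then ?c else 0) * T $$ (l, i'))"
        proof (intro sum.cong refl)
          fix l assume "l \<in> {..<N}"
          hence l: "l < N" by simp
          have "(int m = (int l + j) mod int N) = (int m mod int N = (int l + j) mod int N)"
            using mi by simp
          also have "\<dots> = (int l = (int m - j) mod int N)" by (rule modeq_int) (use l in auto)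
          also have "\<dots> = (l = m0)" using m0 by auto
          finally show "R $$ (m, l) * T $$ (l, i') = (if l = m0 then ?c else 0) * T $$ (l, i')"
            using mi l by (auto simp: R_def)
        qed
        finally show ?thesis .
      qed
      also have "\<dots> = ?c * T $$ (m0, i')" by (rule sum_single2[OF m0(1)])
      finally have rhs: "(R * T) $$ (m, i') = ?c * (if i' = \<sigma> m0 then \<omega> ^ m0 else 0)"
        using mi m0 by (simp add: T_def)
      define a where "a = i' div k2"
      define b where "b = i' mod k2"
      have a: "a < k1" using mi(2) unfolding a_def N_def by (simp add: less_mult_imp_div_less)
      have b: "b < k2" using k2 unfolding b_def by simp
      have m0k1: "(int m - j) mod int k1 = int (m0 mod k1)"
        using m0(2) by (simp add: of_nat_mod N_def mod_mod_cancel)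
      have m0k2: "(int m - j) mod int k2 = int (m0 mod k2)"
        using m0(2) by (simp add: of_nat_mod N_def mod_mod_cancel)
      have c1: "(int (m mod k1) = (int a + j) mod int k1) = (a = m0 mod k1)"
      proof -
        have "(int (m mod k1) = (int a + j) mod int k1) = (int m mod int k1 = (int a + j) mod int k1)"
          by (simp add: of_nat_mod)
        also have "\<dots> = (int a = (int m - j) mod int k1)" by (rule modeq_int) (use a in auto)
        finally show ?thesis using m0k1 by simp
      qed
      have c2: "(int (m mod k2) = (int b + j) mod int k2) = (b = m0 mod k2)"
      proof -
        have "(int (m mod k2) = (int b + j) mod int k2) = (int m mod int k2 = (int b + j) mod int k2)"
          by (simp add: of_nat_mod)
        also have "\<dots> = (int b = (int m - j) mod int k2)" by (rule modeq_int) (use b in auto)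
        finally show ?thesis using m0k2 by simp
      qed
      have ab: "(a = m0 mod k1 \<and> b = m0 mod k2) = (i' = \<sigma> m0)"
      proof
        assume "a = m0 mod k1 \<and> b = m0 mod k2"
        thus "i' = \<sigma> m0" unfolding \<sigma>_def a_def b_def by (metis div_mult_mod_eq)
      next
        assume "i' = \<sigma> m0"
        thus "a = m0 mod k1 \<and> b = m0 mod k2" unfolding a_def b_def using \<sigma>div \<sigma>mod by simp
      qed
      have key: "\<omega> ^ m * (z1 powi j * z2 powi j) = z3 powi j * \<omega> ^ m0"
      proof -
        obtain q where q: "int m = int m0 + j + int N * q"
          using m0(2) by (metis add.commute diff_add_cancel div_mult_mod_eq mult.commute add.assoc)
        have "\<omega> ^ m = \<omega> powi (int m)" by (simp add: power_int_of_nat)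
        also have "\<dots> = \<omega> powi int m0 * \<omega> powi j * (\<omega> ^ N) powi q"
          unfolding q using \<omega>0 by (simp add: power_int_add power_int_mult power_int_of_nat)
        also have "\<dots> = \<omega> ^ m0 * \<omega> powi j" using \<omega>N by (simp add: power_int_of_nat)
        finally have "\<omega> ^ m * (z1 powi j * z2 powi j) = \<omega> ^ m0 * (\<omega> powi j * z1 powi j * z2 powi j)"
          by simp
        also have "\<omega> powi j * z1 powi j * z2 powi j = z3 powi j"
          using \<omega>z by (metis power_int_mult_distrib mult.assoc)
        finally show ?thesis by simp
      qed
      have per1: "\<chi>1 ((t ^^ (m0 mod k1)) h) = \<chi>1 ((t ^^ m0) h)"
        using char_period[OF assms(5,7)] by metis
      have per2: "\<chi>2 ((t ^^ (m0 mod k2)) h) = \<chi>2 ((t ^^ m0) h)"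
        using char_period[OF assms(6,8)] by metis
      show "(T * L) $$ (m, i') = (R * T) $$ (m, i')"
      proof (cases "i' = \<sigma> m0")
        case True
        hence "a = m0 mod k1" "b = m0 mod k2" using ab by auto
        hence "(T * L) $$ (m, i') = \<omega> ^ m * (z1 powi j * z2 powi j) * (\<chi>1 ((t ^^ m0) h) * \<chi>2 ((t ^^ m0) h))"
          unfolding lhs using c1 c2 per1 per2 by (simp add: f1_def f2_def a_def[symmetric] b_def[symmetric] algebra_simps)
        also have "\<dots> = (R * T) $$ (m, i')" unfolding rhs key using True by (simp add: algebra_simps)
        finally show ?thesis .
      next
        case False
        hence "\<not> (a = m0 mod k1 \<and> b = m0 mod k2)" using ab by auto
        hence "(T * L) $$ (m, i') = 0"
          unfolding lhs using c1 c2 by (auto simp: f1_def f2_def a_def[symmetric] b_def[symmetric])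
        thus ?thesis unfolding rhs using False by simp
      qed
    qed (auto simp: T_def R_def L_def)
    thus ?thesis using Leq Req by simp
  qed
  show ?thesis unfolding rep_iso_def
    using TC inv inter unfolding N_def by blast
qed

end
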